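(* The perfect-secrecy capacity of a $(\rho_r,\rho_w)$-AWTP channel satisfies $\mathsf C^0\le 1-\rho_r-\rho_w$; that is, every rate achievable by a family of perfectly secure ($\epsilon=0$) AWTP codes for the channel is at most $1-\rho_r-\rho_w$.
   Context: $\Sigma$ finite additive group, $[N]=\{1,\dots,N\}$. $(\rho_r,\rho_w)$-AWTP channel: adaptive unbounded adversary reads the sent codeword $c\in\Sigma^N$ on a set $S_r$, $|S_r|\le\rho_rN$, and adds an error vector supported in a set $S_w$, $|S_w|\le\rho_wN$, depending on its view. An $(\epsilon,\delta)$-AWTP code: randomized encoder $\mathcal M\to\Sigma^N$ and deterministic decoder $\Sigma^N\to\mathcal M$ such that adversary views for any two messages have statistical distance at most $\epsilon$ and decoding error probability is at most $\delta$ for every adversary; perfectly secure means $\epsilon=0$. Rate $\log|\mathcal M|/(N\log|\Sigma|)$. A family $\{C^N\}$ achieves rate $R$ if for every $\xi>0$ there is $N_0$ with, for all $N\ge N_0$, rate of $C^N\ge R-\xi$ and error probability $\le\xi$. $\mathsf C^0$ is the largest achievable rate over perfectly secure code families. *)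

theory Defs
  imports "HOL-Probability.Probability"
begin

text \<open>Codewords of length N over the alphabet 'a are modelled as functions
  nat => 'a that vanish outside the index set {1..N}.\<close>

definition word_on :: "nat \<Rightarrow> (nat \<Rightarrow> 'a::zero) \<Rightarrow> bool" where
  "word_on N c \<longleftrightarrow> (\<forall>i. i \<notin> {1..N} \<longrightarrow> c i = 0)"

text \<open>Adaptive reading: the query strategy q chooses the next position to read
  as a function of the values read so far. reads q c k is the list of the
  first k values read from the codeword c.\<close>

fun reads :: "('a list \<Rightarrow> nat) \<Rightarrow> (nat \<Rightarrow> 'a) \<Rightarrow> nat \<Rightarrow> 'a list" where
  "reads q c 0 = []"
| "reads q c (Suc k) = reads q c k @ [c (q (reads q c k))]"

definition n_reads :: "nat \<Rightarrow> real \<Rightarrow> nat" where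
  "n_reads N \<rho>r = nat \<lfloor>\<rho>r * real N\<rfloor>"

definition adv_view :: "nat \<Rightarrow> real \<Rightarrow> ('a list \<Rightarrow> nat) \<Rightarrow> (nat \<Rightarrow> 'a) \<Rightarrow> 'a list" where
  "adv_view N \<rho>r q c = reads q c (n_reads N \<rho>r)"

definition valid_reader :: "nat \<Rightarrow> ('a list \<Rightarrow> nat) \<Rightarrow> bool" where
  "valid_reader N q \<longleftrightarrow> (\<forall>v. q v \<in> {1..N})"

definition valid_writer :: "nat \<Rightarrow> real \<Rightarrow> ('a list \<Rightarrow> nat \<Rightarrow> 'a::zero) \<Rightarrow> bool" where
  "valid_writer N \<rho>w e \<longleftrightarrow>
     (\<forall>v. \<exists>W. W \<subseteq> {1..N} \<and> real (card W) \<le> \<rho>w * real N \<and> (\<forall>i. i \<notin> W \<longrightarrow> e v i = 0))"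

definition awtp_code_wf ::
  "nat \<Rightarrow> 'm set \<Rightarrow> ('m \<Rightarrow> (nat \<Rightarrow> 'a::zero) pmf) \<Rightarrow> bool" where
  "awtp_code_wf N M enc \<longleftrightarrow> finite M \<and> M \<noteq> {} \<and>
     (\<forall>m\<in>M. \<forall>c\<in>set_pmf (enc m). word_on N c)"

definition perfectly_secure ::
  "nat \<Rightarrow> real \<Rightarrow> 'm set \<Rightarrow> ('m \<Rightarrow> (nat \<Rightarrow> 'a) pmf) \<Rightarrow> bool" where
  "perfectly_secure N \<rho>r M enc \<longleftrightarrow>
     (\<forall>q. valid_reader N q \<longrightarrow>
        (\<forall>m\<in>M. \<forall>m'\<in>M. map_pmf (adv_view N \<rho>r q) (enc m) = map_pmf (adv_view N \<rho>r q) (enc m')))"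

definition reliable ::
  "nat \<Rightarrow> real \<Rightarrow> real \<Rightarrow> 'm set \<Rightarrow> ('m \<Rightarrow> (nat \<Rightarrow> 'a::ab_group_add) pmf)
     \<Rightarrow> ((nat \<Rightarrow> 'a) \<Rightarrow> 'm) \<Rightarrow> real \<Rightarrow> bool" where
  "reliable N \<rho>r \<rho>w M enc dec \<delta> \<longleftrightarrow>
     (\<forall>q e. valid_reader N q \<longrightarrow> valid_writer N \<rho>w e \<longrightarrow>
        (\<forall>m\<in>M. measure_pmf.prob (enc m)
                   {c. dec (\<lambda>i. c i + e (adv_view N \<rho>r q c) i) \<noteq> m} \<le> \<delta>))"

definition code_rate :: "nat \<Rightarrow> 'm set \<Rightarrow> 'a::finite itself \<Rightarrow> real" where
  "code_rate N M (_::'a itself) = log 2 (real (card M)) / (real N * log 2 (real CARD('a)))"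

definition achievable_perfect ::
  "'a::{ab_group_add,finite} itself \<Rightarrow> 'm itself \<Rightarrow> real \<Rightarrow> real \<Rightarrow> real \<Rightarrow> bool" where
  "achievable_perfect A (_::'m itself) \<rho>r \<rho>w R \<longleftrightarrow>
     (\<exists>(M :: nat \<Rightarrow> 'm set) (enc :: nat \<Rightarrow> 'm \<Rightarrow> (nat \<Rightarrow> 'a) pmf)
        (dec :: nat \<Rightarrow> (nat \<Rightarrow> 'a) \<Rightarrow> 'm).
        (\<forall>N. awtp_code_wf N (M N) (enc N) \<and> perfectly_secure N \<rho>r (M N) (enc N)) \<and>
        (\<forall>\<xi>>0. \<exists>N0. \<forall>N\<ge>N0.
            code_rate N (M N) A \<ge> R - \<xi> \<and> reliable N \<rho>r \<rho>w (M N) (enc N) (dec N) \<xi>))"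

end

theory Submission
  imports Defs
begin

definition Fun0 :: "nat set \<Rightarrow> (nat \<Rightarrow> 'a::zero) set" where
  "Fun0 A = {f. \<forall>i. i \<notin> A \<longrightarrow> f i = 0}"

lemma Fun0_bij: "bij_betw (\<lambda>f. restrict f A) (Fun0 A) (PiE A (\<lambda>_. UNIV))"
  by (rule bij_betw_byWitness[where f'="\<lambda>g i. if i \<in> A then g i else 0"])
     (auto simp: Fun0_def restrict_def PiE_def extensional_def fun_eq_iff)

lemma Fun0_finite: "finite A \<Longrightarrow> finite (Fun0 A :: (nat \<Rightarrow> 'a::{zero,finite}) set)"
proof -
  have "bij_betw (\<lambda>f. restrict f A) (Fun0 A :: (nat \<Rightarrow> 'a) set) (PiE A (\<lambda>_. UNIV::'a set))" by (rule Fun0_bij)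
  moreover assume "finite A"
  ultimately show ?thesis using bij_betw_finite[of "\<lambda>f. restrict f A" "Fun0 A :: (nat \<Rightarrow> 'a) set"] finite_PiE[of A "\<lambda>_. UNIV::'a set"] by simp
qed

lemma Fun0_card: "finite A \<Longrightarrow> card (Fun0 A :: (nat \<Rightarrow> 'a::{zero,finite}) set) = CARD('a) ^ card A"
proof -
  have "bij_betw (\<lambda>f. restrict f A) (Fun0 A :: (nat \<Rightarrow> 'a) set) (PiE A (\<lambda>_. UNIV::'a set))" by (rule Fun0_bij)
  moreover assume "finite A"
  ultimately show ?thesis using bij_betw_same_card card_funcsetE[of A "UNIV::'a set"] by metis
qed

lemma prob_as_sum:
  assumes "finite S" "set_pmf p \<subseteq> S"
  shows "measure_pmf.prob p X = (\<Sum>c\<in>S. if c \<in> X then pmf p c else 0)"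
proof -
  have "measure_pmf.prob p X = measure_pmf.prob p (X \<inter> S)"
    by (metis (no_types) assms(2) inf.absorb_iff2 inf_assoc measure_Int_set_pmf)
  also have "\<dots> = sum (pmf p) (X \<inter> S)" using assms(1) by (simp add: measure_measure_pmf_finite)
  also have "\<dots> = (\<Sum>c\<in>S. if c \<in> X then pmf p c else 0)"
    using assms(1) by (simp add: sum.If_cases Int_commute)
  finally show ?thesis .
qed

lemma fiber_card:
  assumes "finite B" "R \<subseteq> B"
  shows "card {z\<in>(Fun0 B :: (nat \<Rightarrow> 'a::{zero,finite}) set). \<forall>i\<in>R. c i = z i} = CARD('a) ^ card (B - R)"
proof -
  have "bij_betw (\<lambda>z i. if i \<in> R then 0 else z i) {z\<in>(Fun0 B :: (nat \<Rightarrow> 'a) set). \<forall>i\<in>R. c i = z i} (Fun0 (B - R))"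
    by (rule bij_betw_byWitness[where f'="\<lambda>t i. if i \<in> R then c i else t i"])
       (use assms in \<open>auto simp: Fun0_def fun_eq_iff\<close>)
  then show ?thesis using Fun0_card[of "B - R"] assms bij_betw_same_card by fastforce
qed

lemma sumif: "finite U \<Longrightarrow> (\<Sum>u\<in>U. if P u then (a::real) else 0) = a * real (card {u\<in>U. P u})"
  by (simp add: sum.If_cases Int_def)

lemma core:
  fixes enc :: "'m \<Rightarrow> (nat \<Rightarrow> 'a::{ab_group_add,finite}) pmf" and dec :: "(nat \<Rightarrow> 'a) \<Rightarrow> 'm"
  assumes finA: "finite A" and finM: "finite M" and mz: "mz \<in> M"
    and supp: "\<And>m. m \<in> M \<Longrightarrow> set_pmf (enc m) \<subseteq> Fun0 A"
    and RA: "R \<subseteq> A" and WA: "W \<subseteq> A" and RW: "R \<inter> W = {}"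
    and sec: "\<And>m a. m \<in> M \<Longrightarrow> measure_pmf.prob (enc m) {c. \<forall>i\<in>R. c i = a i}
                                  = measure_pmf.prob (enc mz) {c. \<forall>i\<in>R. c i = a i}"
    and rel: "\<And>m u. m \<in> M \<Longrightarrow> u \<in> Fun0 W \<Longrightarrow>
                 measure_pmf.prob (enc m) {c. dec (\<lambda>i. c i + u i) \<noteq> m} \<le> \<delta>"
  shows "real (card M) * (1 - \<delta>) \<le> real CARD('a) ^ card (A - W - R)"
proof -
  define Words where "Words = (Fun0 A :: (nat \<Rightarrow> 'a) set)"
  define U where "U = (Fun0 W :: (nat \<Rightarrow> 'a) set)"
  define Z where "Z = (Fun0 (A - W) :: (nat \<Rightarrow> 'a) set)"
  define \<pi> where "\<pi> z = measure_pmf.prob (enc mz) {c. \<forall>i\<in>R. c i = z i}" for z :: "nat \<Rightarrow> 'a"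
  define proj where "proj c = (\<lambda>i. if i \<in> W then 0 else c i)" for c :: "nat \<Rightarrow> 'a"
  define g where "g m z = card {u\<in>U. dec (\<lambda>i. z i + u i) = m}" for m z
  define pr where "pr m c = pmf (enc m) c" for m c
  have finW: "finite W" using finA WA finite_subset by blast
  have finWords: "finite Words" unfolding Words_def using Fun0_finite finA by blast
  have finU: "finite U" unfolding U_def using Fun0_finite finW by blast
  have finZ: "finite Z" unfolding Z_def using Fun0_finite finA by blast
  have cardU: "card U = CARD('a) ^ card W" unfolding U_def using Fun0_card finW by blast
  have ps: "\<And>m X. m \<in> M \<Longrightarrow> measure_pmf.prob (enc m) X = (\<Sum>c\<in>Words. if c \<in> X then pr m c else 0)"
    unfolding pr_def Words_def using prob_as_sum[OF Fun0_finite[OF finA] supp] by blast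
  have low1: "1 - \<delta> \<le> measure_pmf.prob (enc m) {c. dec (\<lambda>i. c i + u i) = m}"
    if "m \<in> M" "u \<in> U" for m u
  proof -
    have "measure_pmf.prob (enc m) {c. dec (\<lambda>i. c i + u i) \<noteq> m}
        = 1 - measure_pmf.prob (enc m) {c. dec (\<lambda>i. c i + u i) = m}"
      using measure_pmf.prob_compl[of "{c. dec (\<lambda>i. c i + u i) = m}" "enc m"]
      by (simp add: Compl_eq_Diff_UNIV[symmetric] Collect_neg_eq)
    then show ?thesis using rel[OF that(1)] that(2) unfolding U_def by fastforce
  qed
  have Seq: "(\<Sum>u\<in>U. measure_pmf.prob (enc m) {c. dec (\<lambda>i. c i + u i) = m})
           = (\<Sum>c\<in>Words. pr m c * real (g m (proj c)))" if "m \<in> M" for m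
  proof -
    have "(\<Sum>u\<in>U. measure_pmf.prob (enc m) {c. dec (\<lambda>i. c i + u i) = m})
        = (\<Sum>u\<in>U. \<Sum>c\<in>Words. if dec (\<lambda>i. c i + u i) = m then pr m c else 0)"
      using ps[OF that] by simp
    also have "\<dots> = (\<Sum>c\<in>Words. \<Sum>u\<in>U. if dec (\<lambda>i. c i + u i) = m then pr m c else 0)"
      by (rule sum.swap)
    also have "\<dots> = (\<Sum>c\<in>Words. pr m c * real (card {u\<in>U. dec (\<lambda>i. c i + u i) = m}))"
      by (rule sum.cong[OF refl], rule sumif[OF finU])
    also have "\<dots> = (\<Sum>c\<in>Words. pr m c * real (g m (proj c)))"
    proof (rule sum.cong[OF refl])
      fix c assume cW: "c \<in> Words"
      define cw where "cw = (\<lambda>i. if i \<in> W then c i else 0)"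
      define T where "T u = (\<lambda>i. cw i + u i)" for u :: "nat \<Rightarrow> 'a"
      have inj: "inj_on T U" unfolding T_def inj_on_def by (auto simp: fun_eq_iff)
      have eq: "\<And>u. (\<lambda>i. c i + u i) = (\<lambda>i. proj c i + T u i)"
        unfolding T_def cw_def proj_def by (auto simp: fun_eq_iff add.assoc[symmetric])
      have TU: "T u \<in> U" if "u \<in> U" for u
        using that unfolding T_def cw_def U_def Fun0_def by auto
      have img: "T ` {u\<in>U. dec (\<lambda>i. c i + u i) = m} = {v\<in>U. dec (\<lambda>i. proj c i + v i) = m}"
      proof
        show "T ` {u\<in>U. dec (\<lambda>i. c i + u i) = m} \<subseteq> {v\<in>U. dec (\<lambda>i. proj c i + v i) = m}"
        proof
          fix v assume "v \<in> T ` {u\<in>U. dec (\<lambda>i. c i + u i) = m}"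
          then obtain u where u: "u \<in> U" "dec (\<lambda>i. c i + u i) = m" "v = T u" by blast
          show "v \<in> {v\<in>U. dec (\<lambda>i. proj c i + v i) = m}"
            using TU[OF u(1)] u(2,3) eq[of u] by simp
        qed
        show "{v\<in>U. dec (\<lambda>i. proj c i + v i) = m} \<subseteq> T ` {u\<in>U. dec (\<lambda>i. c i + u i) = m}"
        proof
          fix v assume v: "v \<in> {v\<in>U. dec (\<lambda>i. proj c i + v i) = m}"
          define u where "u = (\<lambda>i. v i - cw i)"
          have Tu: "T u = v" unfolding T_def u_def by auto
          have uU: "u \<in> U" using v unfolding u_def U_def Fun0_def cw_def by auto
          have "dec (\<lambda>i. c i + u i) = m" using v eq[of u] Tu by simp
          with uU have "u \<in> {u\<in>U. dec (\<lambda>i. c i + u i) = m}" by simp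
          then show "v \<in> T ` {u\<in>U. dec (\<lambda>i. c i + u i) = m}"
            using Tu by blast
        qed
      qed
      have inj2: "inj_on T {u\<in>U. dec (\<lambda>i. c i + u i) = m}"
        by (rule inj_on_subset[OF inj]) auto
      have "card {u\<in>U. dec (\<lambda>i. c i + u i) = m} = g m (proj c)"
        unfolding g_def using card_image[OF inj2] img by simp
      then show "pr m c * real (card {u\<in>U. dec (\<lambda>i. c i + u i) = m}) = pr m c * real (g m (proj c))"
        by simp
    qed
    finally show ?thesis .
  qed
  have Sup: "(\<Sum>c\<in>Words. pr m c * real (g m (proj c))) \<le> (\<Sum>z\<in>Z. real (g m z) * \<pi> z)"
    if "m \<in> M" for m
  proof -
    have "(\<Sum>c\<in>Words. pr m c * real (g m (proj c)))
        = (\<Sum>z\<in>proj ` Words. \<Sum>c\<in>{c\<in>Words. proj c = z}. pr m c * real (g m (proj c)))"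
      by (rule sum.image_gen[OF finWords])
    also have "\<dots> = (\<Sum>z\<in>proj ` Words. real (g m z) * measure_pmf.prob (enc m) {c. proj c = z})"
    proof (rule sum.cong[OF refl])
      fix z
      have "measure_pmf.prob (enc m) {c. proj c = z} = (\<Sum>c\<in>{c\<in>Words. proj c = z}. pr m c)"
        using ps[OF that] finWords by (simp add: sum.If_cases Int_def conj_commute)
      then show "(\<Sum>c\<in>{c\<in>Words. proj c = z}. pr m c * real (g m (proj c)))
           = real (g m z) * measure_pmf.prob (enc m) {c. proj c = z}"
        by (simp add: sum_distrib_left mult.commute)
    qed
    also have "\<dots> \<le> (\<Sum>z\<in>proj ` Words. real (g m z) * \<pi> z)"
    proof (rule sum_mono)
      fix z
      have "measure_pmf.prob (enc m) {c. proj c = z} \<le> measure_pmf.prob (enc m) {c. \<forall>i\<in>R. c i = z i}"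
        by (rule measure_pmf.finite_measure_mono) (use RW in \<open>auto simp: proj_def\<close>)
      then show "real (g m z) * measure_pmf.prob (enc m) {c. proj c = z} \<le> real (g m z) * \<pi> z"
        unfolding \<pi>_def using sec[OF that] by (simp add: mult_left_mono)
    qed
    also have "\<dots> \<le> (\<Sum>z\<in>Z. real (g m z) * \<pi> z)"
    proof (rule sum_mono2[OF finZ])
      show "proj ` Words \<subseteq> Z" unfolding Z_def Words_def Fun0_def proj_def by auto
      show "\<And>b. b \<in> Z - proj ` Words \<Longrightarrow> 0 \<le> real (g m b) * \<pi> b" unfolding \<pi>_def by simp
    qed
    finally show ?thesis .
  qed
  have sumg: "(\<Sum>m\<in>M. real (g m z)) \<le> real (card U)" for z
  proof -
    have "(\<Sum>m\<in>M. g m z) = card (\<Union>m\<in>M. {u\<in>U. dec (\<lambda>i. z i + u i) = m})"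
      unfolding g_def by (rule card_UN_disjoint[symmetric]) (use finM finU in auto)
    also have "\<dots> \<le> card U" by (rule card_mono[OF finU]) auto
    finally show ?thesis by (metis of_nat_le_iff of_nat_sum)
  qed
  have sumpi: "(\<Sum>z\<in>Z. \<pi> z) = real CARD('a) ^ card (A - W - R)"
  proof -
    have "(\<Sum>z\<in>Z. \<pi> z) = (\<Sum>z\<in>Z. \<Sum>c\<in>Words. if (\<forall>i\<in>R. c i = z i) then pr mz c else 0)"
      unfolding \<pi>_def using ps[OF mz] by simp
    also have "\<dots> = (\<Sum>c\<in>Words. \<Sum>z\<in>Z. if (\<forall>i\<in>R. c i = z i) then pr mz c else 0)"
      by (rule sum.swap)
    also have "\<dots> = (\<Sum>c\<in>Words. pr mz c * real (card {z\<in>Z. \<forall>i\<in>R. c i = z i}))"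
      by (rule sum.cong[OF refl], rule sumif[OF finZ])
    also have "\<dots> = (\<Sum>c\<in>Words. pr mz c * real CARD('a) ^ card (A - W - R))"
    proof (rule sum.cong[OF refl])
      fix c :: "nat \<Rightarrow> 'a"
      have "R \<subseteq> A - W" using RA RW by auto
      then have "card {z\<in>Z. \<forall>i\<in>R. c i = z i} = CARD('a) ^ card (A - W - R)"
        unfolding Z_def using fiber_card[of "A - W" R c] finA by blast
      then show "pr mz c * real (card {z\<in>Z. \<forall>i\<in>R. c i = z i}) = pr mz c * real CARD('a) ^ card (A - W - R)"
        by simp
    qed
    also have "\<dots> = real CARD('a) ^ card (A - W - R) * (\<Sum>c\<in>Words. pr mz c)"
      by (simp add: sum_distrib_right mult.commute)
    also have "(\<Sum>c\<in>Words. pr mz c) = 1"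
      using ps[OF mz, of UNIV] by simp
    finally show ?thesis by simp
  qed
  have "real (card M) * (real (card U) * (1 - \<delta>))
      = (\<Sum>m\<in>M. real (card U) * (1 - \<delta>))" by simp
  also have "\<dots> \<le> (\<Sum>m\<in>M. \<Sum>u\<in>U. measure_pmf.prob (enc m) {c. dec (\<lambda>i. c i + u i) = m})"
  proof (rule sum_mono)
    fix m assume m: "m \<in> M"
    have "(\<Sum>u\<in>U. 1 - \<delta>) \<le> (\<Sum>u\<in>U. measure_pmf.prob (enc m) {c. dec (\<lambda>i. c i + u i) = m})"
      by (rule sum_mono) (rule low1[OF m])
    then show "real (card U) * (1 - \<delta>) \<le> (\<Sum>u\<in>U. measure_pmf.prob (enc m) {c. dec (\<lambda>i. c i + u i) = m})"
      by simp
  qed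
  also have "\<dots> \<le> (\<Sum>m\<in>M. \<Sum>z\<in>Z. real (g m z) * \<pi> z)"
    by (rule sum_mono) (simp add: Seq Sup)
  also have "\<dots> = (\<Sum>z\<in>Z. (\<Sum>m\<in>M. real (g m z)) * \<pi> z)"
    by (subst sum.swap) (simp add: sum_distrib_right)
  also have "\<dots> \<le> (\<Sum>z\<in>Z. real (card U) * \<pi> z)"
    by (rule sum_mono) (rule mult_right_mono[OF sumg], simp add: \<pi>_def)
  also have "\<dots> = real (card U) * real CARD('a) ^ card (A - W - R)"
    by (simp add: sum_distrib_left[symmetric] sumpi)
  finally have "real (card U) * (real (card M) * (1 - \<delta>)) \<le> real (card U) * real CARD('a) ^ card (A - W - R)"
    by (simp add: algebra_simps)
  moreover have "real (card U) > 0" using cardU by simp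
  ultimately show ?thesis by simp
qed

lemma reads_seq: "k \<le> N \<Longrightarrow> reads (\<lambda>v. min (length v + 1) N) c k = map c [1..<k+1]"
proof (induction k)
  case 0 then show ?case by simp
next
  case (Suc k)
  then have IH: "reads (\<lambda>v. min (length v + 1) N) c k = map c [1..<k+1]" by simp
  have "min (k + 1) N = k + 1" using Suc.prems by simp
  moreover have "[1..<Suc k + 1] = [1..<k+1] @ [k+1]" by simp
  moreover have "length (reads (\<lambda>v. min (length v + 1) N) c k) = k" using IH by simp
  ultimately show ?case using IH by (simp del: upt_Suc)
qed

lemma card_rest: "r + w \<le> N \<Longrightarrow> card ({1..N} - {r+1..r+w} - {1..r}) = N - r - w"
proof -
  assume h: "r + w \<le> N"
  have "{1..N} - {r+1..r+w} - {1..r} = {r+w+1..N}" using h by auto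
  then show ?thesis by simp
qed

theorem mainTheorem4:
  fixes \<rho>r \<rho>w R :: real
  assumes "0 \<le> \<rho>r" and "0 \<le> \<rho>w" and "\<rho>r + \<rho>w \<le> 1"
    and "achievable_perfect TYPE('a::{ab_group_add,finite}) TYPE('m) \<rho>r \<rho>w R"
  shows "R \<le> 1 - \<rho>r - \<rho>w"
proof -
  obtain M :: "nat \<Rightarrow> 'm set" and enc :: "nat \<Rightarrow> 'm \<Rightarrow> (nat \<Rightarrow> 'a) pmf" and dec :: "nat \<Rightarrow> (nat \<Rightarrow> 'a) \<Rightarrow> 'm"
    where wf: "\<And>N. awtp_code_wf N (M N) (enc N)" and ps: "\<And>N. perfectly_secure N \<rho>r (M N) (enc N)"
      and ach: "\<And>\<xi>. \<xi> > 0 \<Longrightarrow> \<exists>N0. \<forall>N\<ge>N0. code_rate N (M N) TYPE('a) \<ge> R - \<xi> \<and>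
                 reliable N \<rho>r \<rho>w (M N) (enc N) (dec N) \<xi>"
    using assms(4) unfolding achievable_perfect_def by blast
  show ?thesis
  proof (cases "CARD('a) = 1")
    case True
    have "R \<le> 0"
    proof (rule ccontr)
      assume "\<not> R \<le> 0"
      then obtain N0 where "\<forall>N\<ge>N0. code_rate N (M N) TYPE('a) \<ge> R - R/2" using ach[of "R/2"] by auto
      then have "code_rate N0 (M N0) TYPE('a) \<ge> R - R/2" by blast
      moreover have "code_rate N0 (M N0) TYPE('a) = 0" unfolding code_rate_def using True by simp
      ultimately show False using \<open>\<not> R \<le> 0\<close> by simp
    qed
    then show ?thesis using assms(3) by simp
  next
    case False
    define q where "q = CARD('a)"
    have "0 < q" unfolding q_def by simp
    then have q2: "q \<ge> 2" using False unfolding q_def by linarith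
    define L where "L = log 2 (real q)"
    have L1: "L \<ge> 1" unfolding L_def using q2 by simp
    show ?thesis
    proof (rule ccontr)
      assume "\<not> R \<le> 1 - \<rho>r - \<rho>w"
      define g where "g = R - (1 - \<rho>r - \<rho>w)"
      have gpos: "g > 0" unfolding g_def using \<open>\<not> R \<le> 1 - \<rho>r - \<rho>w\<close> by simp
      define \<xi> where "\<xi> = min (g/4) (1/2)"
      have \<xi>pos: "\<xi> > 0" unfolding \<xi>_def using gpos by simp
      obtain N0 where N0: "\<And>N. N \<ge> N0 \<Longrightarrow> code_rate N (M N) TYPE('a) \<ge> R - \<xi> \<and>
                 reliable N \<rho>r \<rho>w (M N) (enc N) (dec N) \<xi>" using ach[OF \<xi>pos] by blast
      define N where "N = max N0 (nat \<lceil>12/g\<rceil>) + 1"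
      have NN0: "N \<ge> N0" unfolding N_def by simp
      have N1: "N \<ge> 1" unfolding N_def by simp
      have Ng: "real N \<ge> 12/g" unfolding N_def by linarith
      have rate: "code_rate N (M N) TYPE('a) \<ge> R - \<xi>" and rel: "reliable N \<rho>r \<rho>w (M N) (enc N) (dec N) \<xi>"
        using N0[OF NN0] by auto
      define r where "r = n_reads N \<rho>r"
      define w where "w = nat \<lfloor>\<rho>w * real N\<rfloor>"
      have rle: "real r \<le> \<rho>r * real N" "real r \<ge> \<rho>r * real N - 1"
      proof -
        have x0: "0 \<le> \<rho>r * real N" using assms(1) by simp
        have e: "real r = real_of_int \<lfloor>\<rho>r * real N\<rfloor>" unfolding r_def n_reads_def using x0 by simp
        show "real r \<le> \<rho>r * real N" using e of_int_floor_le[of "\<rho>r * real N"] by linarith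
        show "real r \<ge> \<rho>r * real N - 1" using e floor_correct[of "\<rho>r * real N"] by simp
      qed
      have wle: "real w \<le> \<rho>w * real N" "real w \<ge> \<rho>w * real N - 1"
      proof -
        have x0: "0 \<le> \<rho>w * real N" using assms(2) by simp
        have e: "real w = real_of_int \<lfloor>\<rho>w * real N\<rfloor>" unfolding w_def using x0 by simp
        show "real w \<le> \<rho>w * real N" using e of_int_floor_le[of "\<rho>w * real N"] by linarith
        show "real w \<ge> \<rho>w * real N - 1" using e floor_correct[of "\<rho>w * real N"] by simp
      qed
      have rwN: "r + w \<le> N"
      proof -
        have "real r + real w \<le> (\<rho>r + \<rho>w) * real N" using rle wle by (simp add: algebra_simps)
        also have "\<dots> \<le> real N" using mult_right_mono[OF assms(3), of "real N"] by simp
        finally show ?thesis by linarith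
      qed
      from wf[of N] have finM: "finite (M N)" and neM: "M N \<noteq> {}"
        and wo: "\<And>m c. m \<in> M N \<Longrightarrow> c \<in> set_pmf (enc N m) \<Longrightarrow> word_on N c"
        unfolding awtp_code_wf_def by auto
      obtain m0 where m0: "m0 \<in> M N" using neM by blast
      define qd where "qd = (\<lambda>v::'a list. min (length v + 1) N)"
      have vr: "valid_reader N qd" unfolding valid_reader_def qd_def using N1 by auto
      have view: "adv_view N \<rho>r qd c = map c [1..<r+1]" for c :: "nat \<Rightarrow> 'a"
        unfolding adv_view_def qd_def r_def[symmetric] using reads_seq[of r N c] rwN by simp
      have setq: "{c. \<forall>i\<in>{1..r}. c i = a i} = adv_view N \<rho>r qd -` {map a [1..<r+1]}" for a :: "nat \<Rightarrow> 'a"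
      proof -
        have st: "set [1..<r+1] = {1..r}" by auto
        show ?thesis unfolding vimage_def view by (simp del: upt_Suc add: map_eq_conv st atLeastLessThanSuc_atLeastAtMost)
      qed
      have core_app: "real (card (M N)) * (1 - \<xi>) \<le> real q ^ card ({1..N} - {r+1..r+w} - {1..r})"
        unfolding q_def
      proof (rule core[where enc="enc N" and dec="dec N" and mz=m0])
        show "finite {1..N}" by simp
        show "finite (M N)" by (rule finM)
        show "m0 \<in> M N" by (rule m0)
        show "set_pmf (enc N m) \<subseteq> Fun0 {1..N}" if "m \<in> M N" for m
          using wo[OF that] unfolding word_on_def Fun0_def by auto
        show "{1..r} \<subseteq> {1..N}" using rwN by auto
        show "{r+1..r+w} \<subseteq> {1..N}" using rwN by auto
        show "{1..r} \<inter> {r+1..r+w} = {}" by auto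
        show "measure_pmf.prob (enc N m) {c. \<forall>i\<in>{1..r}. c i = a i}
            = measure_pmf.prob (enc N m0) {c. \<forall>i\<in>{1..r}. c i = a i}" if "m \<in> M N" for m a
          using ps[of N] vr that m0 unfolding perfectly_secure_def setq
          by (metis measure_map_pmf)
        show "measure_pmf.prob (enc N m) {c. dec N (\<lambda>i. c i + u i) \<noteq> m} \<le> \<xi>"
          if "m \<in> M N" "u \<in> Fun0 {r+1..r+w}" for m u
        proof -
          have "valid_writer N \<rho>w (\<lambda>v. u)"
            unfolding valid_writer_def
            using that(2) rwN wle by (intro allI exI[of _ "{r+1..r+w}"]) (auto simp: Fun0_def)
          then show ?thesis using rel vr that(1) unfolding reliable_def by blast
        qed
      qed
      then have cM: "real (card (M N)) * (1 - \<xi>) \<le> real q ^ (N - r - w)"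
        using card_rest[OF rwN] by simp
      have half: "1 - \<xi> \<ge> 1/2" unfolding \<xi>_def by simp
      have cMpos: "real (card (M N)) \<ge> 1" using finM neM by (simp add: Suc_leI card_gt_0_iff)
      have cM2: "real (card (M N)) \<le> 2 * real q ^ (N - r - w)"
      proof -
        have "real (card (M N)) * (1/2) \<le> real (card (M N)) * (1 - \<xi>)"
          using half by (intro mult_left_mono) auto
        then show ?thesis using cM by simp
      qed
      have logM: "log 2 (real (card (M N))) \<le> 1 + real (N - r - w) * L"
      proof -
        have "log 2 (real (card (M N))) \<le> log 2 (2 * real q ^ (N - r - w))"
          using cM2 cMpos q2 by (intro log_le_cancel_iff[THEN iffD2]) auto
        also have "\<dots> = 1 + real (N - r - w) * L"
          unfolding L_def using q2 by (simp add: log_mult log_nat_power)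
        finally show ?thesis .
      qed
      have NL: "real N * L > 0" using N1 L1 by simp
      have "R - \<xi> \<le> log 2 (real (card (M N))) / (real N * L)"
        using rate unfolding code_rate_def L_def q_def by simp
      also have "\<dots> \<le> (1 + real (N - r - w) * L) / (real N * L)"
        using logM NL by (simp add: divide_right_mono)
      also have "\<dots> = 1 / (real N * L) + real (N - r - w) / real N"
        using NL L1 by (simp add: add_divide_distrib)
      also have "\<dots> \<le> 1 / real N + real (N - r - w) / real N"
      proof -
        have "1 / (real N * L) \<le> 1 / real N" using L1 N1 by (simp add: frac_le)
        then show ?thesis by simp
      qed
      also have "real (N - r - w) = real N - real r - real w" using rwN by simp
      also have "1 / real N + (real N - real r - real w) / real N \<le> 1 - \<rho>r - \<rho>w + 3 / real N"
      proof -
        have "real N - real r - real w \<le> (1 - \<rho>r - \<rho>w) * real N + 2" using rle wle by (simp add: algebra_simps)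
        then have "(real N - real r - real w) / real N \<le> ((1 - \<rho>r - \<rho>w) * real N + 2) / real N"
          using N1 by (simp add: divide_right_mono)
        also have "\<dots> = 1 - \<rho>r - \<rho>w + 2 / real N" using N1 by (simp add: field_simps)
        finally show ?thesis by simp
      qed
      also have "3 / real N \<le> g / 4"
      proof -
        have "3 / real N \<le> 3 / (12 / g)" using Ng gpos N1 by (intro divide_left_mono) auto
        then show ?thesis using gpos by simp
      qed
      finally have "R - \<xi> \<le> 1 - \<rho>r - \<rho>w + g / 4" by simp
      moreover have "\<xi> \<le> g/4" unfolding \<xi>_def by simp
      ultimately show False using gpos g_def by linarith
    qed
  qed
qed

end
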